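(* Let $\gamma \ge 1$ be an integer, let $\Gamma$ be a set of $\gamma$ nodes and let $u \notin \Gamma$ be a further node. Set $p = \frac{1}{1+\gamma}$. Perform $r$ independent runs; in each run, every node of $\Gamma \cup \{u\}$ is dropped independently with probability $p$. For $v \in \Gamma$, let $X_v$ be the number of runs in which the set of dropped nodes of $\Gamma \cup \{u\}$ is exactly $\{v\}$ (a "$1$-dropout of $v$"), and let $\mathbb{E}_1 = r \cdot p\,(1-p)^{\gamma}$ (the common expected value of the $X_v$). Fix $\delta \in (0,1]$. Then there is a constant $C>0$ depending only on $\delta$ such that for every $t>1$ and every $r \ge C\,(\gamma+1)\log(2\gamma t)$ (i.e. $r = \Omega(\gamma \log \gamma t)$), with probability at least $1-\frac{1}{t}$ it holds simultaneously for every $v \in \Gamma$ that $$(1-\delta)\,\mathbb{E}_1 \le X_v \le (1+\delta)\,\mathbb{E}_1 .$$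
   Context: This models a Dropout GNN (DropGNN): the GNN is executed in $r$ independent runs, and in each run each node is removed ("dropped") independently with probability $p$. $\Gamma$ is the "neighborhood of interest" around the node $u$, of size $\gamma = |\Gamma|$ (not counting $u$). For a subset $S \subseteq \Gamma$, an $|S|$-dropout of $S$ in a run means that exactly the nodes of $S$ (and not $u$, nor any other node of $\Gamma$) are dropped in that run. The choice $p = 1/(1+\gamma)$ maximizes the probability $p(1-p)^\gamma$ of a given $1$-dropout. *)

theory Defs
  imports "HOL-Probability.Probability"
begin

definition drop_prob :: "nat \<Rightarrow> real" where
  "drop_prob \<gamma> = 1 / (1 + real \<gamma>)"

definition run_pmf :: "nat set \<Rightarrow> real \<Rightarrow> (nat \<Rightarrow> bool) pmf" where
  "run_pmf V p = Pi_pmf V False (\<lambda>_. bernoulli_pmf p)"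

definition runs_pmf :: "nat set \<Rightarrow> real \<Rightarrow> nat \<Rightarrow> (nat \<Rightarrow> nat \<Rightarrow> bool) pmf" where
  "runs_pmf V p r = Pi_pmf {..<r} (\<lambda>_. False) (\<lambda>_. run_pmf V p)"

definition dropped :: "nat set \<Rightarrow> (nat \<Rightarrow> nat \<Rightarrow> bool) \<Rightarrow> nat \<Rightarrow> nat set" where
  "dropped V \<omega> i = {x \<in> V. \<omega> i x}"

definition one_dropouts :: "nat set \<Rightarrow> nat \<Rightarrow> nat \<Rightarrow> (nat \<Rightarrow> nat \<Rightarrow> bool) \<Rightarrow> nat" where
  "one_dropouts V r v \<omega> = card {i \<in> {..<r}. dropped V \<omega> i = {v}}"

end

theory Submission
  imports Defs "HOL-Probability.Probability"
begin



lemma card_as_sum: "real (card {i\<in>{..<r::nat}. b i}) = (\<Sum>i<r. if b i then 1 else 0)"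
proof -
  have "(\<Sum>i<r. if b i then 1 else (0::real)) = (\<Sum>i\<in>{i\<in>{..<r}. b i}. 1)"
    by (intro sum.mono_neutral_cong_right) auto
  thus ?thesis by simp
qed

lemma coins_finite: "finite (set_pmf (Pi_pmf {..<r::nat} False (\<lambda>_. bernoulli_pmf q)))"
  by (subst set_Pi_pmf) (auto intro!: finite_PiE_dflt)

lemma mgf:
  fixes l q :: real
  assumes "0 \<le> q" "q \<le> 1"
  shows "measure_pmf.expectation (Pi_pmf {..<r::nat} False (\<lambda>_. bernoulli_pmf q))
     (\<lambda>b. exp (l * real (card {i\<in>{..<r}. b i}))) = (1 - q + q * exp l) ^ r"
proof -
  have eq: "(\<lambda>b. exp (l * real (card {i\<in>{..<r}. b i}))) =
     (\<lambda>b. \<Prod>i\<in>{..<r}. (\<lambda>i x. exp (l * (if x then 1 else 0))) i (b i))"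
  proof
    fix b show "exp (l * real (card {i\<in>{..<r}. b i})) = (\<Prod>i\<in>{..<r}. (\<lambda>i x. exp (l * (if x then 1 else 0))) i (b i))"
      unfolding card_as_sum sum_distrib_left exp_sum[OF finite_lessThan] by simp
  qed
  show ?thesis unfolding eq
    by (subst expectation_prod_Pi_pmf)
       (use assms in \<open>auto intro!: integrable_measure_pmf_finite simp: algebra_simps\<close>)
qed

lemma mgf_bound:
  fixes l q :: real
  assumes "0 \<le> q" "q \<le> 1"
  shows "measure_pmf.expectation (Pi_pmf {..<r::nat} False (\<lambda>_. bernoulli_pmf q))
     (\<lambda>b. exp (l * real (card {i\<in>{..<r}. b i}))) \<le> exp (real r * q * (exp l - 1))"
proof -
  have "(1 - q + q * exp l) ^ r \<le> exp (q * (exp l - 1)) ^ r"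
  proof (rule power_mono)
    show "1 - q + q * exp l \<le> exp (q * (exp l - 1))"
      using exp_ge_add_one_self[of "q * (exp l - 1)"] by (simp add: algebra_simps)
    show "0 \<le> 1 - q + q * exp l" using assms by (simp add: add_nonneg_nonneg)
  qed
  also have "\<dots> = exp (real r * q * (exp l - 1))"
    by (simp add: exp_of_nat_mult[symmetric] mult.assoc)
  finally show ?thesis using mgf[OF assms] by simp
qed

lemma markov_exp:
  fixes l q c :: real
  assumes "0 \<le> q" "q \<le> 1" "0 < c"
  shows "measure_pmf.prob (Pi_pmf {..<r::nat} False (\<lambda>_. bernoulli_pmf q))
     {b. c \<le> exp (l * real (card {i\<in>{..<r}. b i}))} \<le> exp (real r * q * (exp l - 1)) / c"
proof -
  let ?N = "Pi_pmf {..<r::nat} False (\<lambda>_. bernoulli_pmf q)"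
  have "measure_pmf.prob ?N {b. c \<le> exp (l * real (card {i\<in>{..<r}. b i}))}
     \<le> measure_pmf.expectation ?N (\<lambda>b. exp (l * real (card {i\<in>{..<r}. b i}))) / c"
    using integral_Markov_inequality_measure[of "measure_pmf ?N" "\<lambda>b. exp (l * real (card {i\<in>{..<r}. b i}))" UNIV c]
    using assms by (auto intro!: integrable_measure_pmf_finite coins_finite)
  also have "\<dots> \<le> exp (real r * q * (exp l - 1)) / c"
    using mgf_bound[OF assms(1,2)] assms(3) by (simp add: divide_right_mono)
  finally show ?thesis .
qed

lemma upper_tail:
  fixes q \<delta> :: real
  assumes "0 \<le> q" "q \<le> 1" "0 < \<delta>" "\<delta> \<le> 1"
  shows "measure_pmf.prob (Pi_pmf {..<r::nat} False (\<lambda>_. bernoulli_pmf q))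
     {b. (1 + \<delta>) * (real r * q) \<le> real (card {i\<in>{..<r}. b i})} \<le> exp (- (\<delta>^2 * (real r * q) / 4))"
proof -
  define l where "l = \<delta> / 2"
  define \<mu> where "\<mu> = real r * q"
  have \<mu>0: "0 \<le> \<mu>" using assms unfolding \<mu>_def by simp
  have l0: "0 < l" "l \<le> 1" using assms unfolding l_def by auto
  have sub: "{b. (1 + \<delta>) * \<mu> \<le> real (card {i\<in>{..<r}. b i})} \<subseteq>
      {b. exp (l * ((1 + \<delta>) * \<mu>)) \<le> exp (l * real (card {i\<in>{..<r}. b i}))}"
    using l0 by auto
  have "measure_pmf.prob (Pi_pmf {..<r::nat} False (\<lambda>_. bernoulli_pmf q))
     {b. (1 + \<delta>) * \<mu> \<le> real (card {i\<in>{..<r}. b i})} \<le>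
     measure_pmf.prob (Pi_pmf {..<r::nat} False (\<lambda>_. bernoulli_pmf q))
      {b. exp (l * ((1 + \<delta>) * \<mu>)) \<le> exp (l * real (card {i\<in>{..<r}. b i}))}"
    by (rule measure_pmf.finite_measure_mono[OF sub]) auto
  also have "\<dots> \<le> exp (\<mu> * (exp l - 1)) / exp (l * ((1 + \<delta>) * \<mu>))"
    using markov_exp[OF assms(1,2), where c="exp (l * ((1 + \<delta>) * \<mu>))" and l=l and r=r] unfolding \<mu>_def by simp
  also have "\<dots> = exp (\<mu> * (exp l - 1) - l * ((1 + \<delta>) * \<mu>))"
    by (simp add: exp_diff)
  also have "\<dots> \<le> exp (- (\<delta>^2 * \<mu> / 4))"
  proof -
    have "exp l - 1 \<le> l + l^2" using exp_bound[of l] l0 by simp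
    hence "\<mu> * (exp l - 1) \<le> \<mu> * (l + l^2)" using \<mu>0 by (intro mult_left_mono)
    moreover have "\<mu> * (l + l^2) - l * ((1 + \<delta>) * \<mu>) = - (\<delta>^2 * \<mu> / 4)"
      unfolding l_def by (simp add: algebra_simps power2_eq_square)
    ultimately show ?thesis by simp
  qed
  finally show ?thesis unfolding \<mu>_def .
qed

lemma lower_tail:
  fixes q \<delta> :: real
  assumes "0 \<le> q" "q \<le> 1" "0 < \<delta>" "\<delta> \<le> 1"
  shows "measure_pmf.prob (Pi_pmf {..<r::nat} False (\<lambda>_. bernoulli_pmf q))
     {b. real (card {i\<in>{..<r}. b i}) \<le> (1 - \<delta>) * (real r * q)} \<le> exp (- (\<delta>^2 * (real r * q) / 4))"
proof -
  define l where "l = \<delta> / 2"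
  define \<mu> where "\<mu> = real r * q"
  have \<mu>0: "0 \<le> \<mu>" using assms unfolding \<mu>_def by simp
  have l0: "0 < l" "l \<le> 1" using assms unfolding l_def by auto
  have sub: "{b. real (card {i\<in>{..<r}. b i}) \<le> (1 - \<delta>) * \<mu>} \<subseteq>
      {b. exp ((-l) * ((1 - \<delta>) * \<mu>)) \<le> exp ((-l) * real (card {i\<in>{..<r}. b i}))}"
    using l0 by auto
  have "measure_pmf.prob (Pi_pmf {..<r::nat} False (\<lambda>_. bernoulli_pmf q))
     {b. real (card {i\<in>{..<r}. b i}) \<le> (1 - \<delta>) * \<mu>} \<le>
     measure_pmf.prob (Pi_pmf {..<r::nat} False (\<lambda>_. bernoulli_pmf q))
      {b. exp ((-l) * ((1 - \<delta>) * \<mu>)) \<le> exp ((-l) * real (card {i\<in>{..<r}. b i}))}"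
    by (rule measure_pmf.finite_measure_mono[OF sub]) auto
  also have "\<dots> \<le> exp (\<mu> * (exp (-l) - 1)) / exp ((-l) * ((1 - \<delta>) * \<mu>))"
    using markov_exp[OF assms(1,2), where c="exp ((-l) * ((1 - \<delta>) * \<mu>))" and l="-l" and r=r] unfolding \<mu>_def by simp
  also have "\<dots> = exp (\<mu> * (exp (-l) - 1) - (-l) * ((1 - \<delta>) * \<mu>))"
    by (simp only: exp_diff)
  also have "\<dots> \<le> exp (- (\<delta>^2 * \<mu> / 4))"
  proof -
    have e: "exp l \<ge> 1 + l" using exp_ge_add_one_self[of l] by simp
    have "exp (-l) = 1 / exp l" by (simp add: exp_minus field_simps)
    also have "\<dots> \<le> 1 / (1 + l)" using e l0 by (intro divide_left_mono) auto
    finally have "exp (-l) - 1 \<le> - l / (1 + l)" using l0 by (simp add: field_simps)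
    also have "\<dots> \<le> - l + l^2"
      using l0 by (simp add: field_simps power2_eq_square)
    finally have "exp (-l) - 1 \<le> - l + l^2" .
    hence "\<mu> * (exp (-l) - 1) \<le> \<mu> * (- l + l^2)" using \<mu>0 by (intro mult_left_mono)
    moreover have "\<mu> * (- l + l^2) - (-l) * ((1 - \<delta>) * \<mu>) = - (\<delta>^2 * \<mu> / 4)"
      unfolding l_def by (simp add: field_simps power2_eq_square)
    ultimately show ?thesis by simp
  qed
  finally show ?thesis unfolding \<mu>_def .
qed



lemma q_le1: "0 \<le> (p::real) \<Longrightarrow> p \<le> 1 \<Longrightarrow> p * (1 - p) ^ n \<le> 1"
  by (intro mult_le_one power_le_one) auto

lemma run_map:
  assumes V: "finite V" and v: "v \<in> V" and p: "0 \<le> p" "p \<le> 1"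
  shows "map_pmf (\<lambda>S. {x\<in>V. S x} = {v}) (run_pmf V p) = bernoulli_pmf (p * (1 - p) ^ (card V - 1))"
proof -
  let ?R = "run_pmf V p"
  define f0 where "f0 = (\<lambda>x::nat. x = v)"
  have T: "pmf (map_pmf (\<lambda>S. {x\<in>V. S x} = {v}) ?R) True = p * (1 - p) ^ (card V - 1)"
  proof -
    have "pmf (map_pmf (\<lambda>S. {x\<in>V. S x} = {v}) ?R) True = measure ?R {S. {x\<in>V. S x} = {v}}"
      by (simp add: pmf_map vimage_def)
    also have "\<dots> = measure ?R ({S. {x\<in>V. S x} = {v}} \<inter> set_pmf ?R)"
      by (simp add: measure_Int_set_pmf)
    also have "{S. {x\<in>V. S x} = {v}} \<inter> set_pmf ?R = {f0} \<inter> set_pmf ?R"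
    proof -
      have "set_pmf ?R \<subseteq> {f. \<forall>x. x \<notin> V \<longrightarrow> f x = False}"
        unfolding run_pmf_def by (rule set_Pi_pmf_subset[OF V])
      thus ?thesis using v unfolding f0_def by (auto simp: set_eq_iff) 
    qed
    also have "measure ?R ({f0} \<inter> set_pmf ?R) = pmf ?R f0"
      by (simp add: measure_Int_set_pmf measure_pmf_single)
    also have "\<dots> = (\<Prod>x\<in>V. pmf (bernoulli_pmf p) (x = v))"
      unfolding run_pmf_def f0_def using v by (subst pmf_Pi[OF V]) auto
    also have "\<dots> = pmf (bernoulli_pmf p) True * (\<Prod>x\<in>V - {v}. pmf (bernoulli_pmf p) (x = v))"
      using v V by (subst prod.remove[of V v]) auto
    also have "(\<Prod>x\<in>V - {v}. pmf (bernoulli_pmf p) (x = v)) = (\<Prod>x\<in>V - {v}. 1 - p)"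
      using p by (intro prod.cong) auto
    also have "\<dots> = (1 - p) ^ (card V - 1)" using v V by simp
    finally show ?thesis using p by simp
  qed
  show ?thesis
  proof (rule pmf_eqI)
    fix b :: bool
    show "pmf (map_pmf (\<lambda>S. {x\<in>V. S x} = {v}) ?R) b = pmf (bernoulli_pmf (p * (1 - p) ^ (card V - 1))) b"
    proof (cases b)
      case True
      have "0 \<le> p * (1 - p) ^ (card V - 1)" "p * (1 - p) ^ (card V - 1) \<le> 1"
        using p q_le1[of p] by auto
      thus ?thesis using True T by simp
    next
      case False
      have "0 \<le> p * (1 - p) ^ (card V - 1)" "p * (1 - p) ^ (card V - 1) \<le> 1"
        using p q_le1[of p] by auto
      thus ?thesis using False T by (simp add: pmf_False_conv_True)
    qed
  qed
qed

lemma runs_map: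
  assumes V: "finite V" and v: "v \<in> V" and p: "0 \<le> p" "p \<le> 1"
  shows "map_pmf (\<lambda>\<omega> i. dropped V \<omega> i = {v}) (runs_pmf V p r) =
    Pi_pmf {..<r} False (\<lambda>_. bernoulli_pmf (p * (1 - p) ^ (card V - 1)))"
proof -
  have "Pi_pmf {..<r} False (\<lambda>_. bernoulli_pmf (p * (1 - p) ^ (card V - 1))) =
     Pi_pmf {..<r} False (\<lambda>_. map_pmf (\<lambda>S. {x\<in>V. S x} = {v}) (run_pmf V p))"
    using run_map[OF assms] by simp
  also have "\<dots> = map_pmf (\<lambda>h. (\<lambda>S. {x\<in>V. S x} = {v}) \<circ> h) (runs_pmf V p r)"
    unfolding runs_pmf_def by (rule Pi_pmf_map) auto
  also have "(\<lambda>h. (\<lambda>S. {x\<in>V. S x} = {v}) \<circ> h) = (\<lambda>\<omega> i. dropped V \<omega> i = {v})"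
    by (auto simp: dropped_def o_def)
  finally show ?thesis by simp
qed

lemma prob_transfer:
  assumes V: "finite V" and v: "v \<in> V" and p: "0 \<le> p" "p \<le> 1"
  shows "measure_pmf.prob (runs_pmf V p r) {\<omega>. P (real (one_dropouts V r v \<omega>))} =
    measure_pmf.prob (Pi_pmf {..<r} False (\<lambda>_. bernoulli_pmf (p * (1 - p) ^ (card V - 1))))
      {b. P (real (card {i\<in>{..<r}. b i}))}"
  unfolding runs_map[OF assms, symmetric, of r] measure_map_pmf
  by (simp add: one_dropouts_def vimage_def)


lemma aux: "(d::real) \<noteq> 0 \<Longrightarrow> (g::real) + 1 \<noteq> 0 \<Longrightarrow> d^2 * (12/d^2 * (g+1) * L * (1/(3*(g+1))))/4 = L"
proof -
  assume a: "d \<noteq> 0" "g + 1 \<noteq> 0"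
  have "d^2 * (12/d^2 * (g+1) * L * (1/(3*(g+1))))/4 = (d^2 * (12/d^2)) * ((g+1)/(3*(g+1))) * L / 4"
    by (simp only: times_divide_eq_right times_divide_eq_left mult_ac)
  also have "\<dots> = 12 * (1/3) * L / 4" using a by simp
  finally show ?thesis by simp
qed

lemma exp_part:
  fixes \<gamma> :: nat assumes "\<gamma> \<ge> 1"
  shows "(1 - drop_prob \<gamma>) ^ \<gamma> \<ge> 1 / 3"
proof -
  have g: "real \<gamma> > 0" using assms by simp
  have "(1 + 1 / real \<gamma>) ^ \<gamma> \<le> exp (1 / real \<gamma>) ^ \<gamma>"
    by (intro power_mono) (use exp_ge_add_one_self[of "1/real \<gamma>"] g in auto)
  also have "\<dots> = exp 1" using g by (simp flip: exp_of_nat_mult)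
  also have "\<dots> \<le> 3" using exp_bound[of 1] by simp
  finally have A: "(1 + 1 / real \<gamma>) ^ \<gamma> \<le> 3" .
  have "1 - drop_prob \<gamma> = 1 / (1 + 1 / real \<gamma>)"
    unfolding drop_prob_def using g by (simp add: field_simps)
  hence "(1 - drop_prob \<gamma>) ^ \<gamma> = 1 / (1 + 1 / real \<gamma>) ^ \<gamma>" by (simp add: power_divide)
  also have "\<dots> \<ge> 1 / 3" using A g by (intro divide_left_mono) (auto intro!: zero_less_power add_pos_nonneg)
  finally show ?thesis .
qed

theorem theorem1:
  fixes \<delta> :: real
  assumes "0 < \<delta>" and "\<delta> \<le> 1"
  shows "\<exists>C>0. \<forall>(\<Gamma>::nat set) (u::nat) (t::real) (r::nat).
    finite \<Gamma> \<and> card \<Gamma> \<ge> 1 \<and> u \<notin> \<Gamma> \<and> t > 1 \<and>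
    real r \<ge> C * (real (card \<Gamma>) + 1) * ln (2 * real (card \<Gamma>) * t) \<longrightarrow>
    (let \<gamma> = card \<Gamma>; p = drop_prob \<gamma>; V = insert u \<Gamma>;
         E1 = real r * p * (1 - p) ^ \<gamma> in
     measure_pmf.prob (runs_pmf V p r)
       {\<omega>. \<forall>v\<in>\<Gamma>. (1 - \<delta>) * E1 \<le> real (one_dropouts V r v \<omega>) \<and>
                    real (one_dropouts V r v \<omega>) \<le> (1 + \<delta>) * E1}
     \<ge> 1 - 1 / t)"
proof (intro exI[of _ "12 / \<delta>^2"] conjI allI impI)
  show "0 < 12 / \<delta>^2" using assms by simp
next
  fix \<Gamma> :: "nat set" and u :: nat and t :: real and r :: nat
  assume H: "finite \<Gamma> \<and> card \<Gamma> \<ge> 1 \<and> u \<notin> \<Gamma> \<and> t > 1 \<and>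
    real r \<ge> 12 / \<delta>^2 * (real (card \<Gamma>) + 1) * ln (2 * real (card \<Gamma>) * t)"
  define \<gamma> where "\<gamma> = card \<Gamma>"
  define p where "p = drop_prob \<gamma>"
  define V where "V = insert u \<Gamma>"
  define q where "q = p * (1 - p) ^ \<gamma>"
  define E1 where "E1 = real r * p * (1 - p) ^ \<gamma>"
  have fin: "finite \<Gamma>" and g1: "\<gamma> \<ge> 1" and u: "u \<notin> \<Gamma>" and t1: "t > 1"
    and rC: "real r \<ge> 12 / \<delta>^2 * (real \<gamma> + 1) * ln (2 * real \<gamma> * t)"
    using H unfolding \<gamma>_def by auto
  have finV: "finite V" unfolding V_def using fin by simp
  have cardV: "card V - 1 = \<gamma>" unfolding V_def \<gamma>_def using fin u by simp
  have p01: "0 \<le> p" "p \<le> 1" unfolding p_def drop_prob_def by auto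
  have q01: "0 \<le> q" "q \<le> 1" unfolding q_def using p01 q_le1[of p] by auto
  have E1q: "E1 = real r * q" unfolding E1_def q_def by simp
  let ?M = "runs_pmf V p r"
  let ?N = "Pi_pmf {..<r} False (\<lambda>_. bernoulli_pmf q)"
  define A where "A = (\<lambda>v. {\<omega>. real (one_dropouts V r v \<omega>) \<le> (1 - \<delta>) * E1})"
  define B where "B = (\<lambda>v. {\<omega>. (1 + \<delta>) * E1 \<le> real (one_dropouts V r v \<omega>)})"
  define bound where "bound = exp (- (\<delta>^2 * (real r * q) / 4))"
  have PA: "measure_pmf.prob ?M (A v) \<le> bound" if v: "v \<in> \<Gamma>" for v
  proof -
    have "measure_pmf.prob ?M (A v) = measure_pmf.prob ?N {b. real (card {i\<in>{..<r}. b i}) \<le> (1 - \<delta>) * (real r * q)}"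
      unfolding A_def E1q using prob_transfer[OF finV _ p01, of v r "\<lambda>x. x \<le> (1 - \<delta>) * (real r * q)"] v
      using cardV unfolding q_def V_def by simp
    also have "\<dots> \<le> bound" unfolding bound_def using lower_tail[OF q01 assms] .
    finally show ?thesis .
  qed
  have PB: "measure_pmf.prob ?M (B v) \<le> bound" if v: "v \<in> \<Gamma>" for v
  proof -
    have "measure_pmf.prob ?M (B v) = measure_pmf.prob ?N {b. (1 + \<delta>) * (real r * q) \<le> real (card {i\<in>{..<r}. b i})}"
      unfolding B_def E1q using prob_transfer[OF finV _ p01, of v r "\<lambda>x. (1 + \<delta>) * (real r * q) \<le> x"] v
      using cardV unfolding q_def V_def by simp
    also have "\<dots> \<le> bound" unfolding bound_def using upper_tail[OF q01 assms] .
    finally show ?thesis .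
  qed
  define Good where "Good = {\<omega>. \<forall>v\<in>\<Gamma>. (1 - \<delta>) * E1 \<le> real (one_dropouts V r v \<omega>) \<and>
                    real (one_dropouts V r v \<omega>) \<le> (1 + \<delta>) * E1}"
  have sub: "UNIV - Good \<subseteq> (\<Union>v\<in>\<Gamma>. A v \<union> B v)"
    unfolding Good_def A_def B_def by auto
  have "measure_pmf.prob ?M (UNIV - Good) \<le> measure_pmf.prob ?M (\<Union>v\<in>\<Gamma>. A v \<union> B v)"
    by (rule measure_pmf.finite_measure_mono[OF sub]) auto
  also have "\<dots> \<le> (\<Sum>v\<in>\<Gamma>. measure_pmf.prob ?M (A v \<union> B v))"
    by (rule measure_pmf.finite_measure_subadditive_finite[OF fin]) auto
  also have "\<dots> \<le> (\<Sum>v\<in>\<Gamma>. 2 * bound)"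
  proof (rule sum_mono)
    fix v assume v: "v \<in> \<Gamma>"
    have "measure_pmf.prob ?M (A v \<union> B v) \<le> measure_pmf.prob ?M (A v) + measure_pmf.prob ?M (B v)"
      by (rule measure_Un_le) auto
    thus "measure_pmf.prob ?M (A v \<union> B v) \<le> 2 * bound" using PA[OF v] PB[OF v] by simp
  qed
  also have "\<dots> = 2 * real \<gamma> * bound" unfolding \<gamma>_def by simp
  also have "\<dots> \<le> 1 / t"
  proof -
    have gpos: "real \<gamma> > 0" using g1 by simp
    have L: "ln (2 * real \<gamma> * t) > 0" using g1 t1
      by (intro ln_gt_zero) (smt (verit) gpos mult_less_cancel_right2 of_nat_1 of_nat_mono)
    have q3: "q \<ge> 1 / (3 * (real \<gamma> + 1))"
    proof -
      have "q = (1 / (1 + real \<gamma>)) * (1 - p) ^ \<gamma>" unfolding q_def p_def drop_prob_def by simp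
      also have "\<dots> \<ge> (1 / (1 + real \<gamma>)) * (1 / 3)"
        using exp_part[OF g1] unfolding p_def by (intro mult_left_mono) auto
      finally show ?thesis by (simp add: algebra_simps)
    qed
    have "\<delta>^2 * (real r * q) / 4 \<ge> \<delta>^2 * (12 / \<delta>^2 * (real \<gamma> + 1) * ln (2 * real \<gamma> * t) * (1 / (3 * (real \<gamma> + 1)))) / 4"
      using rC q3 L assms gpos
      by (intro divide_right_mono mult_left_mono mult_mono) auto
    also have "\<delta>^2 * (12 / \<delta>^2 * (real \<gamma> + 1) * ln (2 * real \<gamma> * t) * (1 / (3 * (real \<gamma> + 1)))) / 4
        = ln (2 * real \<gamma> * t)"
    proof -
      have "\<delta> \<noteq> 0" "real \<gamma> + 1 \<noteq> 0" using assms gpos by auto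
      thus ?thesis by (rule aux)
    qed
    finally have "bound \<le> exp (- ln (2 * real \<gamma> * t))" unfolding bound_def by simp
    also have "\<dots> = 1 / (2 * real \<gamma> * t)" using gpos t1 by (simp add: exp_minus field_simps)
    finally have "2 * real \<gamma> * bound \<le> 2 * real \<gamma> * (1 / (2 * real \<gamma> * t))"
      using gpos by (intro mult_left_mono) auto
    also have "\<dots> = 1 / t" using gpos by simp
    finally show ?thesis .
  qed
  finally have bad: "measure_pmf.prob ?M (UNIV - Good) \<le> 1 / t" .
  have "measure_pmf.prob ?M Good = 1 - measure_pmf.prob ?M (UNIV - Good)"
    using measure_pmf.prob_compl[of Good ?M] by simp
  hence "measure_pmf.prob ?M Good \<ge> 1 - 1 / t" using bad by simp
  thus "let \<gamma> = card \<Gamma>; p = drop_prob \<gamma>; V = insert u \<Gamma>;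
         E1 = real r * p * (1 - p) ^ \<gamma> in
     measure_pmf.prob (runs_pmf V p r)
       {\<omega>. \<forall>v\<in>\<Gamma>. (1 - \<delta>) * E1 \<le> real (one_dropouts V r v \<omega>) \<and>
                    real (one_dropouts V r v \<omega>) \<le> (1 + \<delta>) * E1}
     \<ge> 1 - 1 / t"
    unfolding Let_def Good_def E1_def V_def p_def \<gamma>_def by simp
qed

end
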